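(* Let $q$ be a prime power, $\mathbb{F}$ an extension field of $\mathbb{F}_q$, $1\le k\le n$, $\ell\ge1$. Let $C$ be an $[n,k]_{\mathbb{F}}$ code that is $\mathrm{GKP}(\ell)$, with generator matrix $G\in\mathbb{F}^{k\times n}$. Let $V_1,\dots,V_\ell$ be $\mathbb{F}_q$-subspaces of $\mathbb{F}_q^n$, each of dimension at most $k$. Then \[ \dim_{\mathbb{F}}\Big(\bigcap_{i\in[\ell]}G_{V_i}\Big)=\max_{P_1\sqcup\cdots\sqcup P_s=[\ell]}\Big(\sum_{i\in[s]}\dim_{\mathbb{F}_q}\Big(\bigcap_{j\in P_i}V_j\Big)-(s-1)k\Big), \] the maximum being over all partitions of $[\ell]$ into nonempty parts.
   Context: An $[n,k]_{\mathbb{F}}$ code is a $k$-dimensional subspace $C\subseteq\mathbb{F}^n$; $G$ is a generator matrix if $C=\{G^T\bm{u}\}$. For an $\mathbb{F}_q$-subspace $V\subseteq\mathbb{F}_q^n$, $G_V\subseteq\mathbb{F}^k$ is the $\mathbb{F}$-column span of $GA$ for any $A\in\mathbb{F}_q^{n\times\dim V}$ with $\mathbb{F}_q$-column span $V$. $C$ is MRD if every nonzero codeword $\bm{v}$ satisfies $\dim_{\mathbb{F}_q}\mathrm{span}_{\mathbb{F}_q}\{v_1,\dots,v_n\}\ge n-k+1$. A kernel pattern $(V_1,\dots,V_k)$ (subspaces of $\mathbb{F}_q^n$) is generic if $\dim(\bigcap_{i\in\Omega}V_i)\le k-|\Omega|$ for all nonempty $\Omega\subseteq[k]$, and has order $\ell$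 if exactly $\ell$ distinct nonzero subspaces occur among them; $C$ attains it if for full-rank $A_i$ with column span $V_i$ there is an invertible $M$ with rows $\bm{m}_i$ and $\bm{m}_iGA_i=0$ for all $i$. $C$ is $\mathrm{GKP}(\ell)$ if it is MRD and attains all generic kernel patterns of order at most $\ell$. *)

theory Defs
  imports "HOL-Analysis.Analysis" "HOL-Library.Disjoint_Sets"
begin

text \<open>The base field F_q is a finite field type 'k, the extension field F is a field type 'a,
  and the extension is given by a field homomorphism phi : 'k => 'a (necessarily injective).
  n = CARD('n), k = CARD('kk); a generator matrix is G :: 'a^'n^'kk (k rows, n columns).\<close>

definition field_hom :: "('k::field \<Rightarrow> 'a::field) \<Rightarrow> bool" where
  "field_hom \<phi> \<longleftrightarrow> \<phi> 1 = 1 \<and> (\<forall>x y. \<phi> (x + y) = \<phi> x + \<phi> y) \<and> (\<forall>x y. \<phi> (x * y) = \<phi> x * \<phi> y)"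

definition vmap :: "('k \<Rightarrow> 'a) \<Rightarrow> 'k^'n \<Rightarrow> 'a^'n" where
  "vmap \<phi> v = (\<chi> j. \<phi> (v $ j))"

text \<open>G_V: the F-column span of G A, where the F_q-columns of A span V; equivalently the
  F-span of the vectors G v, v in V.\<close>
definition GV :: "'a::field^'n^'kk \<Rightarrow> ('k::field \<Rightarrow> 'a) \<Rightarrow> ('k^'n) set \<Rightarrow> ('a^'kk) set" where
  "GV G \<phi> V = vec.span ((\<lambda>v. G *v vmap \<phi> v) ` V)"

text \<open>MRD: every nonzero codeword G^T u has entries spanning an F_q-space of dimension >= n-k+1
  (F viewed as F_q-vector space via scalar multiplication c . x = phi c * x).\<close>
definition MRD :: "('k::field \<Rightarrow> 'a::field) \<Rightarrow> 'a^'n^'kk \<Rightarrow> bool" where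
  "MRD \<phi> G \<longleftrightarrow> (\<forall>u::'a^'kk. transpose G *v u \<noteq> 0 \<longrightarrow>
      vector_space.dim (\<lambda>c x. \<phi> c * x) (range (\<lambda>j. (transpose G *v u) $ j))
        \<ge> CARD('n) - CARD('kk) + 1)"

definition kernel_pattern :: "('kk \<Rightarrow> ('k::field^'n) set) \<Rightarrow> bool" where
  "kernel_pattern V \<longleftrightarrow> (\<forall>i. vec.subspace (V i))"

definition generic_kp :: "('kk::finite \<Rightarrow> ('k::field^'n) set) \<Rightarrow> bool" where
  "generic_kp V \<longleftrightarrow> (\<forall>\<Omega>. \<Omega> \<noteq> {} \<longrightarrow>
      int (vec.dim (\<Inter>i\<in>\<Omega>. V i)) \<le> int CARD('kk) - int (card \<Omega>))"

text \<open>order: number of distinct nonzero subspaces among V_1..V_k\<close>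
definition kp_order :: "('kk \<Rightarrow> ('k::field^'n) set) \<Rightarrow> nat" where
  "kp_order V = card (range V - {{0}})"

text \<open>Attaining: there is an invertible M with rows m_i such that m_i G A_i = 0, i.e.
  m_i G v = 0 for all v in the column span V_i of A_i.\<close>
definition attains :: "('k::field \<Rightarrow> 'a::field) \<Rightarrow> 'a^'n^'kk \<Rightarrow> ('kk \<Rightarrow> ('k^'n) set) \<Rightarrow> bool" where
  "attains \<phi> G V \<longleftrightarrow> (\<exists>M::'a^'kk^'kk. invertible M \<and>
      (\<forall>i. \<forall>v\<in>V i. ((M ** G) *v vmap \<phi> v) $ i = 0))"

definition GKP :: "('k::field \<Rightarrow> 'a::field) \<Rightarrow> 'a^'n^'kk \<Rightarrow> nat \<Rightarrow> bool" where
  "GKP \<phi> G l \<longleftrightarrow> MRD \<phi> G \<and>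
     (\<forall>V :: 'kk \<Rightarrow> ('k^'n) set. kernel_pattern V \<and> generic_kp V \<and> kp_order V \<le> l \<longrightarrow> attains \<phi> G V)"

end

theory Submission
  imports Defs
begin


lemma comb_lemma:
  fixes L :: "nat set" and f :: "nat set \<Rightarrow> int"
  assumes fin: "finite L"
    and nonneg: "\<And>S. S \<subseteq> L \<Longrightarrow> S \<noteq> {} \<Longrightarrow> f S \<ge> 0"
    and sub: "\<And>S T. S \<subseteq> L \<Longrightarrow> T \<subseteq> L \<Longrightarrow> S \<inter> T \<noteq> {} \<Longrightarrow> f (S \<union> T) + f (S \<inter> T) \<le> f S + f T"
  shows "\<exists>a P. (\<forall>i. a i \<ge> 0) \<and> (\<forall>S. S \<subseteq> L \<and> S \<noteq> {} \<longrightarrow> sum a S \<le> f S) \<and> partition_on L P \<and> sum a L = (\<Sum>B\<in>P. f B)"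
proof -
  define feas where "feas a \<longleftrightarrow> (\<forall>i. a i \<ge> 0) \<and> (\<forall>S. S \<subseteq> L \<and> S \<noteq> {} \<longrightarrow> sum a S \<le> f S)" for a :: "nat \<Rightarrow> int"
  have f0: "feas (\<lambda>_. 0)" using nonneg by (auto simp: feas_def)
  have bnd: "\<forall>y. (\<exists>a. feas a \<and> nat (sum a L) = y) \<longrightarrow> y \<le> nat (f L)"
  proof (intro allI impI)
    fix y assume "\<exists>a. feas a \<and> nat (sum a L) = y"
    then obtain a where a: "feas a" "nat (sum a L) = y" by blast
    show "y \<le> nat (f L)"
    proof (cases "L = {}")
      case True then show ?thesis using a by simp
    next
      case False then show ?thesis using a by (auto simp: feas_def)
    qed
  qed
  obtain x where x: "\<exists>a. feas a \<and> nat (sum a L) = x"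
     "\<forall>y. (\<exists>a. feas a \<and> nat (sum a L) = y) \<longrightarrow> y \<le> x"
  proof -
    have "\<exists>a. feas a \<and> nat (sum a L) = 0" using f0 by (intro exI[of _ "\<lambda>_. 0"]) simp
    from Nat.ex_has_greatest_nat[of "\<lambda>y. \<exists>a. feas a \<and> nat (sum a L) = y", OF this bnd]
    show ?thesis using that by blast
  qed
  then obtain a where a: "feas a" "nat (sum a L) = x" by blast
  have apos: "\<And>i. a i \<ge> 0" and afe: "\<And>S. S \<subseteq> L \<Longrightarrow> S \<noteq> {} \<Longrightarrow> sum a S \<le> f S"
    using a(1) by (auto simp: feas_def)
  have sumpos: "\<And>b S. feas b \<Longrightarrow> sum b S \<ge> 0" by (simp add: feas_def sum_nonneg)
  have maxa: "sum b L \<le> sum a L" if "feas b" for b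
    using x(2) a that sumpos[OF that] sumpos[OF a(1)] by (metis nat_le_eq_zle)
  define tight where "tight S \<longleftrightarrow> S \<subseteq> L \<and> S \<noteq> {} \<and> sum a S = f S" for S
  have c1: "\<exists>S. tight S \<and> i \<in> S" if iL: "i \<in> L" for i
  proof (rule ccontr)
    assume nt: "\<not> (\<exists>S. tight S \<and> i \<in> S)"
    define b where "b = a(i := a i + 1)"
    have sb: "sum b S = sum a S + (if i \<in> S then 1 else 0)" if "finite S" for S
    proof (cases "i \<in> S")
      case True
      have "sum b S = b i + sum b (S - {i})" using True that by (simp add: sum.remove)
      also have "sum b (S - {i}) = sum a (S - {i})" by (rule sum.cong) (auto simp: b_def)
      also have "sum a S = a i + sum a (S - {i})" using True that by (simp add: sum.remove)
      ultimately show ?thesis using True by (simp add: b_def)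
    next
      case False
      have "sum b S = sum a S" by (rule sum.cong) (use False in \<open>auto simp: b_def\<close>)
      then show ?thesis using False by simp
    qed
    have "feas b"
      unfolding feas_def
    proof (intro conjI allI impI)
      fix j show "b j \<ge> 0" using apos by (simp add: b_def add_nonneg_nonneg)
    next
      fix S assume S: "S \<subseteq> L \<and> S \<noteq> {}"
      have fS: "finite S" using S fin finite_subset by blast
      show "sum b S \<le> f S"
      proof (cases "i \<in> S")
        case True
        have "sum a S \<noteq> f S" using nt S True unfolding tight_def by blast
        then have "sum a S < f S" using afe[of S] S by linarith
        then show ?thesis using sb[OF fS] True by simp
      next
        case False then show ?thesis using sb[OF fS] afe[of S] S by simp
      qed
    qed
    then have "sum b L \<le> sum a L" by (rule maxa)
    then show False using sb[OF fin] iL by simp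
  qed
  have c2: "tight (S \<union> T) \<and> tight (S \<inter> T)" if "tight S" "tight T" "S \<inter> T \<noteq> {}" for S T
  proof -
    have fS: "finite S" "finite T" using that fin finite_subset unfolding tight_def by blast+
    have e: "sum a (S \<union> T) + sum a (S \<inter> T) = sum a S + sum a T"
      by (rule sum.union_inter[OF fS])
    have "f (S \<union> T) + f (S \<inter> T) \<le> f S + f T" using sub that unfolding tight_def by blast
    moreover have "sum a (S \<union> T) \<le> f (S \<union> T)"
      using afe that unfolding tight_def by auto
    moreover have "sum a (S \<inter> T) \<le> f (S \<inter> T)"
      using afe[of "S \<inter> T"] that unfolding tight_def by auto
    ultimately show ?thesis using that e unfolding tight_def by auto
  qed
  have c3: "tight (\<Union>F) \<and> i \<in> \<Union>F" if "finite F" "F \<noteq> {}" "\<forall>S\<in>F. tight S \<and> i \<in> S" for F i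
    using that
  proof (induction F rule: finite_ne_induct)
    case (singleton x) then show ?case by auto
  next
    case (insert x F)
    then have "tight x" "tight (\<Union>F)" "i \<in> x" "i \<in> \<Union>F" by auto
    then have "tight (x \<union> \<Union>F)" using c2 by blast
    then show ?case using \<open>i \<in> x\<close> by simp
  qed
  define T where "T i = \<Union>{S. tight S \<and> i \<in> S}" for i
  have tT: "tight (T i) \<and> i \<in> T i" if "i \<in> L" for i
  proof -
    have "{S. tight S \<and> i \<in> S} \<subseteq> Pow L" unfolding tight_def by auto
    then have "finite {S. tight S \<and> i \<in> S}" using fin finite_subset by blast
    moreover have "{S. tight S \<and> i \<in> S} \<noteq> {}" using c1[OF that] by blast
    ultimately show ?thesis unfolding T_def by (intro c3) auto
  qed
  have sT: "S \<subseteq> T i" if "tight S" "i \<in> S" for S i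
    using that unfolding T_def by blast
  have eqT: "T i = T j" if "i \<in> L" "j \<in> L" "T i \<inter> T j \<noteq> {}" for i j
  proof -
    have "tight (T i \<union> T j)" using c2 tT that by blast
    then have "T i \<union> T j \<subseteq> T i" "T i \<union> T j \<subseteq> T j" using sT tT that by blast+
    then show ?thesis by blast
  qed
  define P where "P = T ` L"
  have part: "partition_on L P"
    unfolding partition_on_def P_def
  proof (intro conjI)
    show "\<Union> (T ` L) = L" using tT unfolding tight_def by blast
    show "disjoint (T ` L)" unfolding pairwise_def disjnt_def using eqT by blast
    show "{} \<notin> T ` L" using tT by blast
  qed
  have "sum a L = sum (sum a) P"
  proof -
    have "sum a (\<Union>P) = (sum \<circ> sum) a P"
    proof (rule sum.Union_disjoint)
      show "\<forall>A\<in>P. finite A" using tT fin finite_subset unfolding P_def tight_def by blast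
      show "\<forall>A\<in>P. \<forall>B\<in>P. A \<noteq> B \<longrightarrow> A \<inter> B = {}" unfolding P_def using eqT by blast
    qed
    moreover have "\<Union>P = L" using part by (simp add: partition_on_def)
    ultimately show ?thesis by simp
  qed
  also have "\<dots> = sum f P" by (rule sum.cong) (use tT in \<open>auto simp: P_def tight_def\<close>)
  finally show ?thesis using apos afe part by blast
qed



lemma assign_lemma:
  fixes L :: "nat set" and a :: "nat \<Rightarrow> int"
  assumes "finite L" "0 \<notin> L" "\<forall>i. a i \<ge> 0" "sum a L \<le> int CARD('kk::finite)"
  shows "\<exists>g :: 'kk \<Rightarrow> nat. (\<forall>r. g r = 0 \<or> g r \<in> L) \<and> (\<forall>i\<in>L. int (card {r. g r = i}) = a i)
           \<and> int (card {r. g r \<noteq> 0}) = sum a L"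
  using assms
proof (induction L rule: finite_induct)
  case empty
  show ?case by (intro exI[of _ "\<lambda>_. 0"]) simp
next
  case (insert i L)
  have ai: "a i \<ge> 0" using insert by simp
  have sL: "sum a L \<ge> 0" using insert by (simp add: sum_nonneg)
  have "a i + sum a L \<le> int CARD('kk)" using insert.prems(3) insert.hyps by simp
  then have "sum a L \<le> int CARD('kk)" using ai by linarith
  then obtain g :: "'kk \<Rightarrow> nat" where g: "\<forall>r. g r = 0 \<or> g r \<in> L" "\<forall>j\<in>L. int (card {r. g r = j}) = a j"
     "int (card {r. g r \<noteq> 0}) = sum a L" using insert by auto
  have cu: "card {r. g r = 0} + card {r. g r \<noteq> 0} = CARD('kk)"
  proof -
    have "card ({r. g r = 0} \<union> {r. g r \<noteq> 0}) = card {r. g r = 0} + card {r. g r \<noteq> 0}"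
      by (rule card_Un_disjoint) auto
    moreover have "{r. g r = 0} \<union> {r. g r \<noteq> 0} = UNIV" by auto
    ultimately show ?thesis by simp
  qed
  have "nat (a i) \<le> card {r. g r = 0}"
    using cu g(3) insert.prems(3) insert.hyps ai by simp
  then obtain Y where Y: "Y \<subseteq> {r. g r = 0}" "card Y = nat (a i)" "finite Y"
    by (rule obtain_subset_with_card_n)
  define g' where "g' r = (if r \<in> Y then i else g r)" for r
  have i0: "i \<noteq> 0" using insert by auto
  have gi: "g r \<noteq> i" for r using g(1) insert.hyps i0 by metis
  have e1: "{r. g' r = i} = Y" using gi by (auto simp: g'_def)
  have e2: "{r. g' r = j} = {r. g r = j}" if "j \<in> L" for j
    using Y(1) that insert.prems(1) insert.hyps(2) by (auto simp: g'_def)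
  have e3: "{r. g' r \<noteq> 0} = {r. g r \<noteq> 0} \<union> Y" using Y(1) i0 by (auto simp: g'_def)
  have "card {r. g' r \<noteq> 0} = card {r. g r \<noteq> 0} + card Y"
    unfolding e3 by (rule card_Un_disjoint) (use Y in auto)
  then have "int (card {r. g' r \<noteq> 0}) = sum a (insert i L)"
    using g(3) Y(2) ai insert.hyps by simp
  moreover have "\<forall>r. g' r = 0 \<or> g' r \<in> insert i L" using g(1) unfolding g'_def by (metis insertCI)
  moreover have "\<forall>j\<in>insert i L. int (card {r. g' r = j}) = a j"
    using e1 e2 g(2) Y(2) ai by auto
  ultimately show ?case by blast
qed

lemma dim_bound_lemma:
  fixes M :: "'a::field^'kk^'kk" and Z :: "('a^'kk) set" and R :: "'kk set"
  assumes "invertible M" "\<forall>y\<in>Z. \<forall>r\<in>R. (M *v y) $ r = 0"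
  shows "vec.dim Z \<le> CARD('kk) - card R"
proof -
  obtain M' :: "'a^'kk^'kk" where M': "M' ** M = mat 1" using assms(1) unfolding invertible_def by blast
  have "Z \<subseteq> vec.span ((\<lambda>r. M' *v axis r 1) ` (- R))"
  proof
    fix y assume y: "y \<in> Z"
    have "y = M' *v (M *v y)" by (simp add: matrix_vector_mul_assoc M')
    also have "M *v y = (\<Sum>r\<in>UNIV. ((M *v y) $ r) *s axis r 1)" by (simp add: basis_expansion)
    also have "\<dots> = (\<Sum>r\<in>- R. ((M *v y) $ r) *s axis r 1)"
      by (rule sum.mono_neutral_right) (use y assms(2) in auto)
    also have "M' *v \<dots> = (\<Sum>r\<in>- R. ((M *v y) $ r) *s (M' *v axis r 1))"
      by (simp add: vec.linear_sum[OF matrix_vector_mul_linear_gen] vector_scalar_commute)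
    finally have "y = (\<Sum>r\<in>- R. ((M *v y) $ r) *s (M' *v axis r 1))" .
    moreover have "(\<Sum>r\<in>- R. ((M *v y) $ r) *s (M' *v axis r 1)) \<in> vec.span ((\<lambda>r. M' *v axis r 1) ` (- R))"
      by (intro vec.span_sum vec.span_scale vec.span_base) auto
    ultimately show "y \<in> vec.span ((\<lambda>r. M' *v axis r 1) ` (- R))" by simp
  qed
  then have "vec.dim Z \<le> card ((\<lambda>r. M' *v axis r 1) ` (- R))" by (rule vec.dim_le_card) simp
  also have "\<dots> \<le> card (- R)" by (rule card_image_le) simp
  also have "card (- R) = CARD('kk) - card R"
  proof -
    have "card (R \<union> - R) = card R + card (- R)" by (rule card_Un_disjoint) auto
    then show ?thesis by simp
  qed
  finally show ?thesis .
qed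



lemma upper_bound:
  fixes \<phi> :: "'k::field \<Rightarrow> 'a::field" and G :: "'a^'n^'kk" and V :: "nat \<Rightarrow> ('k^'n) set"
  assumes gkp: "GKP \<phi> G l" and l1: "l \<ge> 1"
    and VV: "\<forall>i\<in>{1..l}. vec.subspace (V i) \<and> vec.dim (V i) \<le> CARD('kk)"
  shows "\<exists>P. partition_on {1..l} P \<and> int (vec.dim (\<Inter>i\<in>{1..l}. GV G \<phi> (V i))) \<le>
     (\<Sum>B\<in>P. int (vec.dim (\<Inter>j\<in>B. V j))) - (int (card P) - 1) * int CARD('kk)"
proof -
  define L where "L = {1..l}"
  define k where "k = CARD('kk)"
  define f where "f S = int k - int (vec.dim (\<Inter>j\<in>S. V j))" for S
  have finL: "finite L" "0 \<notin> L" "L \<noteq> {}" using l1 by (auto simp: L_def)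
  have subV: "vec.subspace (\<Inter>j\<in>S. V j)" if "S \<subseteq> L" "S \<noteq> {}" for S
    by (rule vec.subspace_Inter) (use VV that in \<open>auto simp: L_def\<close>)
  have dimle: "vec.dim (\<Inter>j\<in>S. V j) \<le> k" if SS: "S \<subseteq> L" "S \<noteq> {}" for S
  proof -
    obtain j where j: "j \<in> S" using SS by blast
    have "vec.dim (\<Inter>j\<in>S. V j) \<le> vec.dim (V j)" by (rule vec.dim_subset) (use j in blast)
    also have "\<dots> \<le> k" using VV j SS unfolding L_def k_def by blast
    finally show ?thesis .
  qed
  have nonneg: "f S \<ge> 0" if "S \<subseteq> L" "S \<noteq> {}" for S using dimle[OF that] by (simp add: f_def)
  have sub: "f (S \<union> T) + f (S \<inter> T) \<le> f S + f T" if "S \<subseteq> L" "T \<subseteq> L" "S \<inter> T \<noteq> {}" for S T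
  proof -
    define A where "A = (\<Inter>j\<in>S. V j)"
    define B where "B = (\<Inter>j\<in>T. V j)"
    have sA: "vec.subspace A" "vec.subspace B" unfolding A_def B_def using subV that by auto
    have e1: "(\<Inter>j\<in>S \<union> T. V j) = A \<inter> B" by (auto simp: A_def B_def)
    have ds: "vec.dim {x + y |x y. x \<in> A \<and> y \<in> B} + vec.dim (A \<inter> B) = vec.dim A + vec.dim B"
      by (rule vec.dim_sums_Int[OF sA])
    have "{x + y |x y. x \<in> A \<and> y \<in> B} \<subseteq> (\<Inter>j\<in>S \<inter> T. V j)"
    proof (intro subsetI INT_I)
      fix z j assume z: "z \<in> {x + y |x y. x \<in> A \<and> y \<in> B}" and j: "j \<in> S \<inter> T"
      then obtain x y where xy: "z = x + y" "x \<in> A" "y \<in> B" by blast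
      have "x \<in> V j" "y \<in> V j" using xy j unfolding A_def B_def by auto
      moreover have "vec.subspace (V j)" using VV that j unfolding L_def by auto
      ultimately show "z \<in> V j" using xy(1) vec.subspace_add by blast
    qed
    then have "vec.dim {x + y |x y. x \<in> A \<and> y \<in> B} \<le> vec.dim (\<Inter>j\<in>S \<inter> T. V j)"
      by (rule vec.dim_subset)
    then show ?thesis using ds unfolding f_def e1 A_def[symmetric] B_def[symmetric] by linarith
  qed
  obtain a P where aP: "\<forall>i. a i \<ge> 0" "\<forall>S. S \<subseteq> L \<and> S \<noteq> {} \<longrightarrow> sum a S \<le> f S"
     "partition_on L P" "sum a L = (\<Sum>B\<in>P. f B)"
    using comb_lemma[OF finL(1) nonneg sub] by blast
  have "sum a L \<le> f L" using aP(2) finL by blast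
  also have "f L \<le> int k" by (simp add: f_def)
  finally have saL: "sum a L \<le> int CARD('kk)" by (simp add: k_def)
  obtain g :: "'kk \<Rightarrow> nat" where g: "\<forall>r. g r = 0 \<or> g r \<in> L" "\<forall>i\<in>L. int (card {r. g r = i}) = a i"
           "int (card {r. g r \<noteq> 0}) = sum a L"
    using assign_lemma[OF finL(1) finL(2) aP(1) saL] by blast
  define W where "W r = (if g r = 0 then {0} else V (g r))" for r
  have kp: "kernel_pattern W"
    unfolding kernel_pattern_def W_def
  proof (intro allI)
    fix r
    show "vec.subspace (if g r = 0 then {0} else V (g r))"
    proof (cases "g r = 0")
      case False
      then have "g r \<in> {1..l}" using g(1) unfolding L_def by metis
      then show ?thesis using VV False by simp
    qed simp
  qed
  have ord: "kp_order W \<le> l"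
  proof -
    have "range W - {{0}} \<subseteq> V ` L"
    proof
      fix X assume "X \<in> range W - {{0}}"
      then obtain r where r: "X = W r" "W r \<noteq> {0}" by blast
      then have "g r \<noteq> 0" unfolding W_def by auto
      then have "g r \<in> L" "X = V (g r)" using g(1) r unfolding W_def by metis+
      then show "X \<in> V ` L" by blast
    qed
    then have "card (range W - {{0}}) \<le> card (V ` L)" by (rule card_mono[rotated]) (simp add: finL)
    also have "\<dots> \<le> card L" by (rule card_image_le) (simp add: finL)
    finally show ?thesis by (simp add: kp_order_def L_def)
  qed
  have gen: "generic_kp W"
    unfolding generic_kp_def
  proof (intro allI impI)
    fix \<Omega> :: "'kk set" assume \<Omega>: "\<Omega> \<noteq> {}"
    have cO: "card \<Omega> \<le> CARD('kk)" by (rule card_mono) auto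
    show "int (vec.dim (\<Inter> (W ` \<Omega>))) \<le> int CARD('kk) - int (card \<Omega>)"
    proof (cases "\<exists>r\<in>\<Omega>. g r = 0")
      case True
      then have "\<Inter> (W ` \<Omega>) \<subseteq> vec.span {}" unfolding W_def by auto
      then have "vec.dim (\<Inter> (W ` \<Omega>)) \<le> card ({} :: ('k^'n) set)" by (rule vec.dim_le_card) simp
      then have d0: "vec.dim (\<Inter> (W ` \<Omega>)) = 0" by simp
      show ?thesis using cO unfolding d0 by simp
    next
      case False
      define S where "S = g ` \<Omega>"
      have gL: "\<forall>r\<in>\<Omega>. g r \<in> L" using g(1) False by metis
      have S: "S \<subseteq> L" "S \<noteq> {}" using gL \<Omega> unfolding S_def by auto
      have eq: "\<Inter> (W ` \<Omega>) = (\<Inter>j\<in>S. V j)" using False unfolding W_def S_def by auto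
      have "card \<Omega> \<le> card {r. g r \<in> S}" by (rule card_mono) (auto simp: S_def)
      also have "{r. g r \<in> S} = (\<Union>j\<in>S. {r. g r = j})" by auto
      also have "card \<dots> = (\<Sum>j\<in>S. card {r. g r = j})"
      proof (rule card_UN_disjoint)
        show "finite S" using S(1) finL(1) by (rule finite_subset)
      qed auto
      finally have "int (card \<Omega>) \<le> int (\<Sum>j\<in>S. card {r. g r = j})" by (rule of_nat_mono)
      also have "\<dots> = (\<Sum>j\<in>S. int (card {r. g r = j}))" by (rule of_nat_sum)
      also have "\<dots> = sum a S" by (rule sum.cong) (use g(2) S in auto)
      also have "\<dots> \<le> f S" using aP(2) S by blast
      finally show ?thesis unfolding eq f_def k_def by linarith
    qed
  qed
  obtain M :: "'a^'kk^'kk" where M: "invertible M" "\<forall>i. \<forall>v\<in>W i. ((M ** G) *v vmap \<phi> v) $ i = 0"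
    using gkp kp ord gen unfolding GKP_def attains_def by blast
  have kill: "(M *v y) $ r = 0" if "g r \<noteq> 0" "y \<in> GV G \<phi> (V (g r))" for r y
  proof -
    have "y \<in> vec.span ((\<lambda>v. G *v vmap \<phi> v) ` V (g r))" using that(2) by (simp add: GV_def)
    then show ?thesis
    proof (induction rule: vec.span_induct)
      case base
      show ?case unfolding vec.subspace_def
        by (simp add: matrix_vector_right_distrib vector_scalar_commute)
    next
      case (step x)
      then obtain v where "v \<in> V (g r)" "x = G *v vmap \<phi> v" by blast
      then show ?case using M(2) that(1) unfolding W_def
        by (metis matrix_vector_mul_assoc)
    qed
  qed
  define Z where "Z = (\<Inter>i\<in>{1..l}. GV G \<phi> (V i))"
  have "vec.dim Z \<le> CARD('kk) - card {r. g r \<noteq> 0}"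
  proof (rule dim_bound_lemma[OF M(1)], intro ballI)
    fix y r assume y: "y \<in> Z" and r: "r \<in> {r. g r \<noteq> 0}"
    then have r0: "g r \<noteq> 0" by simp
    then have "g r \<in> {1..l}" using g(1) unfolding L_def by metis
    then have "y \<in> GV G \<phi> (V (g r))" using y unfolding Z_def by blast
    then show "(M *v y) $ r = 0" using kill r0 by blast
  qed
  moreover have "card {r. g r \<noteq> 0} \<le> k" using g(3) saL unfolding k_def by linarith
  ultimately have "int (vec.dim Z) \<le> int k - int (card {r. g r \<noteq> 0})" unfolding k_def by linarith
  then have "int (vec.dim Z) \<le> int k - sum a L" using g(3) by simp
  also have "sum a L = (\<Sum>B\<in>P. f B)" by (rule aP(4))
  also have "(\<Sum>B\<in>P. f B) = int (card P) * int k - (\<Sum>B\<in>P. int (vec.dim (\<Inter>j\<in>B. V j)))"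
    by (simp add: f_def sum_subtractf)
  finally have "int (vec.dim Z) \<le> (\<Sum>B\<in>P. int (vec.dim (\<Inter>j\<in>B. V j))) - (int (card P) - 1) * int k"
    by (simp add: algebra_simps)
  then show ?thesis using aP(3) unfolding Z_def k_def L_def by blast
qed



lemma field_hom_simps:
  assumes "field_hom \<phi>"
  shows "\<phi> 0 = 0" "\<phi> 1 = 1" "\<phi> (x + y) = \<phi> x + \<phi> y" "\<phi> (x * y) = \<phi> x * \<phi> y"
proof -
  show "\<phi> 1 = 1" "\<phi> (x + y) = \<phi> x + \<phi> y" "\<phi> (x * y) = \<phi> x * \<phi> y"
    using assms by (auto simp: field_hom_def)
  have "\<phi> (0 + 0) = \<phi> 0 + \<phi> 0" using assms unfolding field_hom_def by blast
  then have "\<phi> 0 = \<phi> 0 + \<phi> 0" by simp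
  then show "\<phi> 0 = 0" by (metis add_cancel_right_right)
qed

lemma vs_phi:
  assumes "field_hom (\<phi> :: 'k::field \<Rightarrow> 'a::field)"
  shows "vector_space (\<lambda>a (x::'a). \<phi> a * x)"
  by unfold_locales (simp_all add: field_hom_simps[OF assms] algebra_simps)

lemma rank_full_inj:
  fixes G :: "'a::field^'n^'kk"
  assumes "rank G = CARD('kk)" "transpose G *v u = 0"
  shows "u = 0"
proof -
  define R where "R = rows G"
  have R: "R = range (\<lambda>i. row i G)" by (auto simp: rows_def R_def)
  have fin: "finite R" unfolding R by simp
  have "vec.dim R \<le> card R" by (rule vec.dim_le_card) (auto intro: vec.span_base fin)
  moreover have "card R \<le> CARD('kk)" unfolding R by (rule card_image_le) simp
  moreover have "vec.dim R = CARD('kk)" using assms(1) by (simp add: row_rank_def_gen R_def)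
  ultimately have cR: "card R = CARD('kk)" by simp
  have inj: "inj (\<lambda>i. row i G)" by (rule eq_card_imp_inj_on) (use cR R in auto)
  have "vec.independent R"
    using vec.card_eq_dim[of R R] cR \<open>vec.dim R = CARD('kk)\<close> fin vec.span_superset by auto
  then have indep: "\<forall>c. (\<Sum>v\<in>R. c v *s v) = 0 \<longrightarrow> (\<forall>v\<in>R. c v = 0)"
    by (simp add: vec.independent_explicit)
  define c where "c v = u $ (inv (\<lambda>i. row i G) v)" for v
  have "(\<Sum>v\<in>R. c v *s v) = (\<Sum>i\<in>UNIV. c (row i G) *s row i G)"
    unfolding R by (rule sum.reindex[OF inj, unfolded comp_def])
  also have "\<dots> = (\<Sum>i\<in>UNIV. u $ i *s row i G)"
    by (rule sum.cong) (simp_all add: c_def inv_f_f[OF inj])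
  also have "\<dots> = transpose G *v u"
    by (simp add: vec_eq_iff sum_component matrix_vector_mult_def transpose_def row_def mult.commute)
  finally have "(\<Sum>v\<in>R. c v *s v) = 0" using assms(2) by simp
  then have "\<forall>v\<in>R. c v = 0" using indep by blast
  then have "\<forall>v. u $ inv (\<lambda>i. row i G) (row v G) = 0" unfolding R c_def by auto
  then have "u $ i = 0" for i
  proof -
    assume a: "\<forall>v. u $ inv (\<lambda>i. row i G) (row v G) = 0"
    have "inv (\<lambda>i. row i G) (row i G) = i" using inv_f_f[OF inj, of i] by simp
    then show ?thesis using a[rule_format, of i] by simp
  qed
  then show ?thesis unfolding vec_eq_iff zero_index by blast
qed

lemma mrd_span_bound:
  fixes \<phi> :: "'k::field \<Rightarrow> 'a::field" and c :: "'a^'n" and S :: "('k^'n) set"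
  assumes hom: "field_hom \<phi>" and ind: "vec.independent S"
    and z: "\<forall>s\<in>S. (\<Sum>m\<in>UNIV. \<phi> (s$m) * c$m) = 0"
  shows "vector_space.dim (\<lambda>a x. \<phi> a * x) (range (\<lambda>j. c$j)) \<le> CARD('n) - card S"
proof -
  define Lc where "Lc s = (\<Sum>m\<in>UNIV. \<phi> (s$m) * c$m)" for s :: "'k^'n"
  obtain B where B: "S \<subseteq> B" "vec.independent B" "UNIV \<subseteq> vec.span B"
    using vec.maximal_independent_subset_extend[of S UNIV] ind by (metis subset_UNIV)
  have finB: "finite B" using B(2) vec.finiteI_independent by blast
  have cB: "card B = CARD('n)"
  proof -
    have "vec.dim (vec.span B) = card B" by (rule vec.dim_span_eq_card_independent[OF B(2)])
    moreover have "vec.span B = UNIV" using B(3) by auto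
    ultimately show ?thesis using vec_dim_card by metis
  qed
  have Lc0: "Lc 0 = 0" by (simp add: Lc_def field_hom_simps[OF hom])
  have Lcadd: "Lc (x + y) = Lc x + Lc y" for x y
  proof -
    have "Lc (x + y) = (\<Sum>m\<in>UNIV. \<phi> (x$m) * c$m + \<phi> (y$m) * c$m)"
      unfolding Lc_def by (rule sum.cong, rule refl, simp only: vector_add_component field_hom_simps(3)[OF hom] distrib_right)
    also have "\<dots> = Lc x + Lc y" unfolding Lc_def by (rule sum.distrib)
    finally show ?thesis .
  qed
  have Lcscale: "Lc (a *s x) = \<phi> a * Lc x" for a x
  proof -
    have "Lc (a *s x) = (\<Sum>m\<in>UNIV. \<phi> a * (\<phi> (x$m) * c$m))"
      unfolding Lc_def by (rule sum.cong, rule refl, simp only: vector_smult_component field_hom_simps(4)[OF hom] mult.assoc)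
    also have "\<dots> = \<phi> a * Lc x" unfolding Lc_def by (rule sum_distrib_left[symmetric])
    finally show ?thesis .
  qed
  have Lcaxis: "Lc (axis j 1) = c$j" for j
  proof -
    have "Lc (axis j 1) = (\<Sum>m\<in>UNIV. if m = j then c$m else 0)"
      unfolding Lc_def by (rule sum.cong) (auto simp: axis_def field_hom_simps[OF hom])
    also have "\<dots> = c$j" by simp
    finally show ?thesis .
  qed
  have LcS: "Lc x = 0" if "x \<in> S" for x using z that unfolding Lc_def by blast
  interpret vs: vector_space "(\<lambda>a (x::'a). \<phi> a * x)" by (rule vs_phi[OF hom])
  define Sp where "Sp = vs.span (Lc ` (B - S))"
  have inSp: "Lc x \<in> Sp" for x
  proof -
    have "x \<in> vec.span B" using B(3) by blast
    then show ?thesis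
    proof (induction rule: vec.span_induct)
      case base
      show ?case
      proof (rule vec.subspaceI)
        show "0 \<in> {x. Lc x \<in> Sp}" unfolding mem_Collect_eq Lc0 Sp_def by (rule vs.span_zero)
      next
        fix x y assume "x \<in> {x. Lc x \<in> Sp}" "y \<in> {x. Lc x \<in> Sp}"
        then show "x + y \<in> {x. Lc x \<in> Sp}" unfolding mem_Collect_eq Lcadd Sp_def by (metis vs.span_add)
      next
        fix a x assume "x \<in> {x. Lc x \<in> Sp}"
        then show "a *s x \<in> {x. Lc x \<in> Sp}" unfolding mem_Collect_eq Lcscale Sp_def by (metis vs.span_scale)
      qed
    next
      case (step x)
      show ?case
      proof (cases "x \<in> S")
        case True show ?thesis unfolding LcS[OF True] Sp_def by (rule vs.span_zero)
      next
        case False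
        have "Lc x \<in> Lc ` (B - S)" using step False by blast
        then show ?thesis unfolding Sp_def mem_Collect_eq by (rule vs.span_base)
      qed
    qed
  qed
  have "range (\<lambda>j. c$j) \<subseteq> Sp"
  proof
    fix y assume "y \<in> range (\<lambda>j. c$j)"
    then obtain j where j: "y = c$j" by blast
    then show "y \<in> Sp" using inSp[of "axis j 1"] unfolding Lcaxis by blast
  qed
  then have "vs.dim (range (\<lambda>j. c$j)) \<le> card (Lc ` (B - S))"
    unfolding Sp_def by (rule vs.dim_le_card) (use finB in blast)
  also have "\<dots> \<le> card (B - S)" by (rule card_image_le) (use finB in blast)
  also have "\<dots> = CARD('n) - card S" using cB B(1) finB by (metis card_Diff_subset finite_subset)
  finally show ?thesis .
qed



lemma kernel_inj:
  fixes A :: "'a::field^'m^'m"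
  assumes "\<And>u. A *v u = 0 \<Longrightarrow> u = 0"
  shows "inj ((*v) A)"
proof (rule injI)
  fix x y assume "A *v x = A *v y"
  then have "A *v (x - y) = 0" by (simp add: matrix_vector_mult_diff_distrib)
  then show "x = y" using assms[of "x - y"] by simp
qed

lemma matvec_sum_cols:
  fixes B :: "'a::field^'m^'p"
  shows "B *v c = (\<Sum>j\<in>UNIV. c$j *s column j B)"
  by (simp add: vec_eq_iff sum_component matrix_vector_mult_def column_def mult.commute)

lemma mrd_key:
  fixes \<phi> :: "'k::field \<Rightarrow> 'a::field" and G :: "'a^'n^'kk" and S :: "('k^'n) set"
  assumes hom: "field_hom \<phi>" and mrd: "MRD \<phi> G" and rk: "rank G = CARD('kk)"
    and ind: "vec.independent S" and cS: "card S = CARD('kk)"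
  shows "inj_on (\<lambda>s. G *v vmap \<phi> s) S \<and> vec.independent ((\<lambda>s. G *v vmap \<phi> s) ` S)"
proof -
  define h where "h s = G *v vmap \<phi> s" for s
  have finS: "finite S" using cS by (intro card_ge_0_finite) simp
  obtain b :: "'kk \<Rightarrow> 'k^'n" where b: "bij_betw b UNIV S"
    using finite_same_card_bij[of "UNIV :: 'kk set" S] finS cS by auto
  define B' :: "'a^'kk^'kk" where "B' = (\<chi> i j. (h (b j))$i)"
  have colB: "column j B' = h (b j)" for j by (simp add: column_def B'_def vec_eq_iff)
  have tker: "u = 0" if tu: "transpose B' *v u = 0" for u
  proof (rule ccontr)
    assume u0: "u \<noteq> 0"
    define cc where "cc = transpose G *v u"
    have cc0: "cc \<noteq> 0" using rank_full_inj[OF rk, of u] u0 unfolding cc_def by blast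
    have key: "(\<Sum>i\<in>UNIV. (h s)$i * u$i) = (\<Sum>m\<in>UNIV. \<phi> (s$m) * cc$m)" for s
    proof -
      have "(\<Sum>i\<in>UNIV. (h s)$i * u$i) = (\<Sum>i\<in>UNIV. \<Sum>m\<in>UNIV. G$i$m * \<phi> (s$m) * u$i)"
        by (simp add: h_def matrix_vector_mult_def vmap_def sum_distrib_right)
      also have "\<dots> = (\<Sum>m\<in>UNIV. \<Sum>i\<in>UNIV. G$i$m * \<phi> (s$m) * u$i)" by (rule sum.swap)
      also have "\<dots> = (\<Sum>m\<in>UNIV. \<phi> (s$m) * cc$m)"
        by (simp add: cc_def matrix_vector_mult_def transpose_def sum_distrib_left mult_ac)
      finally show ?thesis .
    qed
    have zS: "\<forall>s\<in>S. (\<Sum>m\<in>UNIV. \<phi> (s$m) * cc$m) = 0"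
    proof
      fix s assume "s \<in> S"
      then obtain j where j: "s = b j" using b by (metis bij_betw_imp_surj_on imageE)
      have "(transpose B' *v u) $ j = (\<Sum>i\<in>UNIV. (h (b j))$i * u$i)"
        by (simp add: matrix_vector_mult_def transpose_def B'_def)
      then show "(\<Sum>m\<in>UNIV. \<phi> (s$m) * cc$m) = 0" using tu key j by simp
    qed
    have "vector_space.dim (\<lambda>a x. \<phi> a * x) (range (\<lambda>j. cc$j)) \<le> CARD('n) - card S"
      by (rule mrd_span_bound[OF hom ind zS])
    moreover have "vector_space.dim (\<lambda>a x. \<phi> a * x) (range (\<lambda>j. cc$j)) \<ge> CARD('n) - CARD('kk) + 1"
      using mrd cc0 unfolding MRD_def cc_def by blast
    ultimately show False using cS by simp
  qed
  have "inj ((*v) (transpose B'))" by (rule kernel_inj) (rule tker)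
  then have "det (transpose B') \<noteq> 0"
    using det_nz_iff_inj_gen[of "(*v) (transpose B')"] by simp
  then have "det B' \<noteq> 0" by simp
  then have "inj ((*v) B')" using det_nz_iff_inj_gen[of "(*v) B'"] by simp
  then have surj: "surj ((*v) B')" by (rule vec.linear_inj_imp_surj[OF matrix_vector_mul_linear_gen])
  have spanU: "vec.span (h ` S) = UNIV"
  proof -
    have "y \<in> vec.span (h ` S)" for y
    proof -
      obtain c where "y = B' *v c" using surj by (metis surjD)
      then have y: "y = (\<Sum>j\<in>UNIV. c$j *s h (b j))" by (simp add: matvec_sum_cols colB)
      have "h (b j) \<in> h ` S" for j using b by (metis bij_betwE UNIV_I imageI)
      then show ?thesis unfolding y by (intro vec.span_sum vec.span_scale vec.span_base) auto
    qed
    then show ?thesis by auto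
  qed
  have dimk: "vec.dim (h ` S) = CARD('kk)"
    using vec.dim_span[of "h ` S"] spanU vec_dim_card by metis
  have finhS: "finite (h ` S)" using finS by simp
  have "vec.dim (h ` S) \<le> card (h ` S)" by (rule vec.dim_le_card) (auto intro: vec.span_base finhS)
  moreover have "card (h ` S) \<le> card S" by (rule card_image_le[OF finS])
  ultimately have chS: "card (h ` S) = card S" using dimk cS by simp
  have inj: "inj_on h S" by (rule eq_card_imp_inj_on[OF finS chS])
  have sup: "h ` S \<subseteq> vec.span (h ` S)" by (rule vec.span_superset)
  have "card (h ` S) = vec.dim (h ` S)" using chS cS dimk by simp
  then have "vec.independent (h ` S)"
    using vec.card_eq_dim[of "h ` S" "h ` S"] finhS sup by blast
  then show ?thesis using inj unfolding h_def by simp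
qed

lemma mrd_dim:
  fixes \<phi> :: "'k::field \<Rightarrow> 'a::field" and G :: "'a^'n^'kk" and U :: "('k^'n) set"
  assumes hom: "field_hom \<phi>" and mrd: "MRD \<phi> G" and rk: "rank G = CARD('kk)"
    and kn: "CARD('kk) \<le> CARD('n)" and dU: "vec.dim U \<le> CARD('kk)"
  shows "vec.dim U \<le> vec.dim (GV G \<phi> U)"
proof -
  define h where "h s = G *v vmap \<phi> s" for s
  obtain S where S: "S \<subseteq> U" "vec.independent S" "U \<subseteq> vec.span S" "card S = vec.dim U"
    using vec.basis_exists[of U] by blast
  obtain B where B: "S \<subseteq> B" "vec.independent B" "UNIV \<subseteq> vec.span B"
    using vec.maximal_independent_subset_extend[of S UNIV] S(2) by (metis subset_UNIV)
  have finB: "finite B" using B(2) vec.finiteI_independent by blast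
  have cB: "card B = CARD('n)"
  proof -
    have "vec.dim (vec.span B) = card B" by (rule vec.dim_span_eq_card_independent[OF B(2)])
    moreover have "vec.span B = UNIV" using B(3) by auto
    ultimately show ?thesis using vec_dim_card by metis
  qed
  have finS: "finite S" using finB B(1) finite_subset by blast
  have "card (B - S) = CARD('n) - card S" using cB B(1) finS by (simp add: card_Diff_subset)
  then have "CARD('kk) - card S \<le> card (B - S)" using kn by simp
  then obtain X where X: "X \<subseteq> B - S" "card X = CARD('kk) - card S" "finite X"
    by (rule obtain_subset_with_card_n)
  define S' where "S' = S \<union> X"
  have indS': "vec.independent S'" using B(1,2) X(1) unfolding S'_def
    by (metis Diff_subset Un_subset_iff order_trans vec.independent_mono)
  have "card S' = card S + card X" unfolding S'_def by (rule card_Un_disjoint) (use finS X in auto)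
  then have cS': "card S' = CARD('kk)" using X(2) S(4) dU by simp
  from mrd_key[OF hom mrd rk indS' cS']
  have k: "inj_on h S'" "vec.independent (h ` S')" unfolding h_def by auto
  have injS: "inj_on h S" using k(1) unfolding S'_def by (rule inj_on_subset) simp
  have indS: "vec.independent (h ` S)" using k(2) unfolding S'_def by (rule vec.independent_mono) auto
  have sub: "h ` S \<subseteq> GV G \<phi> U" unfolding GV_def h_def using S(1) by (auto intro: vec.span_base)
  have "card (h ` S) \<le> vec.dim (GV G \<phi> U)" by (rule vec.independent_card_le_dim[OF sub indS])
  then show ?thesis using card_image[OF injS] S(4) by simp
qed



lemma inter_dim_bound:
  fixes X :: "nat set \<Rightarrow> ('a::field^'kk) set" and P :: "nat set set"
  assumes "finite P" "P \<noteq> {}" "\<forall>B\<in>P. vec.subspace (X B)"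
  shows "(\<Sum>B\<in>P. int (vec.dim (X B))) - (int (card P) - 1) * int CARD('kk) \<le> int (vec.dim (\<Inter>B\<in>P. X B))"
  using assms
proof (induction P rule: finite_ne_induct)
  case (singleton x)
  then show ?case by simp
next
  case (insert B P)
  have sA: "vec.subspace (X B)" using insert.prems by simp
  have sC: "vec.subspace (\<Inter>B\<in>P. X B)" using insert.prems by (intro vec.subspace_Inter) auto
  have ds: "vec.dim {x + y |x y. x \<in> X B \<and> y \<in> (\<Inter>B\<in>P. X B)} + vec.dim (X B \<inter> (\<Inter>B\<in>P. X B))
     = vec.dim (X B) + vec.dim (\<Inter>B\<in>P. X B)" by (rule vec.dim_sums_Int[OF sA sC])
  have le: "vec.dim {x + y |x y. x \<in> X B \<and> y \<in> (\<Inter>B\<in>P. X B)} \<le> CARD('kk)"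
    by (rule dim_subset_UNIV_cart_gen)
  have IH: "(\<Sum>B\<in>P. int (vec.dim (X B))) - (int (card P) - 1) * int CARD('kk) \<le> int (vec.dim (\<Inter>B\<in>P. X B))"
    using insert.IH insert.prems by simp
  have e1: "(\<Inter>B\<in>insert B P. X B) = X B \<inter> (\<Inter>B\<in>P. X B)" by simp
  have e2: "(\<Sum>B\<in>insert B P. int (vec.dim (X B))) = int (vec.dim (X B)) + (\<Sum>B\<in>P. int (vec.dim (X B)))"
    using insert.hyps by simp
  have e3: "int (card (insert B P)) = int (card P) + 1" using insert.hyps by simp
  show ?case unfolding e1 e2 e3 using ds le IH by (simp add: algebra_simps)
qed

lemma lower_bound:
  fixes \<phi> :: "'k::field \<Rightarrow> 'a::field" and G :: "'a^'n^'kk" and V :: "nat \<Rightarrow> ('k^'n) set"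
  assumes hom: "field_hom \<phi>" and kn: "CARD('kk) \<le> CARD('n)" and rk: "rank G = CARD('kk)"
    and gkp: "GKP \<phi> G l" and l1: "l \<ge> 1"
    and VV: "\<forall>i\<in>{1..l}. vec.subspace (V i) \<and> vec.dim (V i) \<le> CARD('kk)"
    and P: "partition_on {1..l} P"
  shows "(\<Sum>B\<in>P. int (vec.dim (\<Inter>j\<in>B. V j))) - (int (card P) - 1) * int CARD('kk)
      \<le> int (vec.dim (\<Inter>i\<in>{1..l}. GV G \<phi> (V i)))"
proof -
  have mrd: "MRD \<phi> G" using gkp by (simp add: GKP_def)
  have PL: "\<Union>P = {1..l}" "{} \<notin> P" using P by (auto simp: partition_on_def)
  have finP: "finite P" using PL(1) by (metis finite_UnionD finite_atLeastAtMost)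
  have Pne: "P \<noteq> {}" using PL(1) l1 by auto
  define U where "U B = (\<Inter>j\<in>B. V j)" for B
  define X where "X B = GV G \<phi> (U B)" for B
  have BL: "B \<subseteq> {1..l}" "B \<noteq> {}" if "B \<in> P" for B using PL that by auto
  have dU: "vec.dim (U B) \<le> CARD('kk)" if BP: "B \<in> P" for B
  proof -
    obtain j where j: "j \<in> B" using BL[OF BP] by blast
    have "vec.dim (U B) \<le> vec.dim (V j)" unfolding U_def by (rule vec.dim_subset) (use j in blast)
    also have "\<dots> \<le> CARD('kk)" using VV j BL[OF BP] by blast
    finally show ?thesis .
  qed
  have dUX: "vec.dim (U B) \<le> vec.dim (X B)" if "B \<in> P" for B
    unfolding X_def by (rule mrd_dim[OF hom mrd rk kn dU[OF that]])
  have sX: "\<forall>B\<in>P. vec.subspace (X B)" unfolding X_def GV_def by (simp add: vec.subspace_span)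
  have ib: "(\<Sum>B\<in>P. int (vec.dim (X B))) - (int (card P) - 1) * int CARD('kk) \<le> int (vec.dim (\<Inter>B\<in>P. X B))"
    by (rule inter_dim_bound[OF finP Pne sX])
  have "(\<Inter>B\<in>P. X B) \<subseteq> (\<Inter>i\<in>{1..l}. GV G \<phi> (V i))"
  proof (intro subsetI INT_I)
    fix y i assume y: "y \<in> (\<Inter>B\<in>P. X B)" and i: "i \<in> {1..l}"
    then obtain B where B: "B \<in> P" "i \<in> B" using PL(1) by blast
    have "U B \<subseteq> V i" unfolding U_def using B(2) by blast
    then have "X B \<subseteq> GV G \<phi> (V i)" unfolding X_def GV_def by (intro vec.span_mono image_mono)
    then show "y \<in> GV G \<phi> (V i)" using y B(1) by blast
  qed
  then have "vec.dim (\<Inter>B\<in>P. X B) \<le> vec.dim (\<Inter>i\<in>{1..l}. GV G \<phi> (V i))" by (rule vec.dim_subset)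
  moreover have "(\<Sum>B\<in>P. int (vec.dim (U B))) \<le> (\<Sum>B\<in>P. int (vec.dim (X B)))"
    by (rule sum_mono) (use dUX in simp)
  ultimately show ?thesis using ib unfolding U_def by linarith
qed

theorem mainTheorem15:
  fixes \<phi> :: "'k::{finite,field} \<Rightarrow> 'a::field"
    and G :: "'a^'n^'kk"
    and l :: nat
    and V :: "nat \<Rightarrow> ('k^'n) set"
  assumes "field_hom \<phi>"
    and "CARD('kk) \<le> CARD('n)"
    and "l \<ge> 1"
    and "rank G = CARD('kk)"
    and "GKP \<phi> G l"
    and "\<forall>i\<in>{1..l}. vec.subspace (V i) \<and> vec.dim (V i) \<le> CARD('kk)"
  shows "int (vec.dim (\<Inter>i\<in>{1..l}. GV G \<phi> (V i))) =
    Max {(\<Sum>B\<in>P. int (vec.dim (\<Inter>j\<in>B. V j))) - (int (card P) - 1) * int CARD('kk)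
         | P. partition_on {1..l} P}"
proof -
  define val where "val P = (\<Sum>B\<in>P. int (vec.dim (\<Inter>j\<in>B. V j))) - (int (card P) - 1) * int CARD('kk)" for P
  define LHS where "LHS = int (vec.dim (\<Inter>i\<in>{1..l}. GV G \<phi> (V i)))"
  have eqS: "{(\<Sum>B\<in>P. int (vec.dim (\<Inter>j\<in>B. V j))) - (int (card P) - 1) * int CARD('kk)
         | P. partition_on {1..l} P} = val ` {P. partition_on {1..l} P}"
    unfolding val_def by blast
  have "{P. partition_on {1..l} P} \<subseteq> Pow (Pow {1..l})"
    by (auto simp: partition_on_def)
  then have fin: "finite {P. partition_on {1..l} P}" by (rule finite_subset) simp
  obtain P0 where P0: "partition_on {1..l} P0" "LHS \<le> val P0"
    using upper_bound[OF assms(5) assms(3) assms(6)] unfolding LHS_def val_def by blast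
  have lb: "val P \<le> LHS" if "partition_on {1..l} P" for P
    unfolding val_def LHS_def by (rule lower_bound[OF assms(1) assms(2) assms(4) assms(5) assms(3) assms(6) that])
  have "Max (val ` {P. partition_on {1..l} P}) = LHS"
  proof (rule Max_eqI)
    show "finite (val ` {P. partition_on {1..l} P})" using fin by simp
    show "y \<le> LHS" if "y \<in> val ` {P. partition_on {1..l} P}" for y using that lb by blast
    have "val P0 = LHS" using lb[OF P0(1)] P0(2) by simp
    then show "LHS \<in> val ` {P. partition_on {1..l} P}" using P0(1) by (metis imageI mem_Collect_eq)
  qed
  then show ?thesis unfolding eqS LHS_def by simp
qed

end
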